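(* Let $\alpha$ be a proper fraction ($0<\alpha<1$), let $u=(u_k)$ be a sequence with $u_k\neq 0$ for all $k$, let $\lambda$ be any sequence space and $\mu\in\{c_0,c\}$. Let $A=(a_{nk})$ be an infinite matrix and let $B=(b_{nk})$ be given by $$b_{nk}=\sum_{j=0}^n\Big(\sum_{i=0}^{n-j}(-1)^i\frac{\Gamma(\alpha+1)}{i!\,\Gamma(\alpha+1-i)}u_{i+j}\Big)a_{jk}\qquad(n,k\in\mathbb{N}).$$ Then $A\in(\lambda:\mu(\Gamma,\Delta^{(\alpha)},u))$ if and only if $B\in(\lambda:\mu)$.
   Context: $\omega$ denotes the space of all real or complex sequences, $c$ the convergent sequences, $c_0$ the null sequences; $\mathbb{N}=\{0,1,2,\dots\}$; $\Gamma$ is the gamma function. For $x\in\omega$, $\Delta^{(\alpha)}x_k=\sum_{i=0}^{\infty}(-1)^i\frac{\Gamma(\alpha+1)}{i!\,\Gamma(\alpha+1-i)}x_{k-i}$ with $x_j=0$ for $j<0$. For $\mu\in\{c_0,c\}$, $\mu(\Gamma,\Delta^{(\alpha)},u)=\{x\in\omega:(\sum_{j=0}^k u_j\Delta^{(\alpha)}x_j)_k\in\mu\}$. For sequence spaces $X,Y$, $(X:Y)$ denotes the class of infinite matrices $A=(a_{nk})$ such that for every $x\in X$ the series $(Ax)_n=\sum_k a_{nk}x_k$ converges for each $n$ and $Ax=((Ax)_n)_n\in Y$. *)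

theory Defs
  imports "HOL-Analysis.Analysis"
begin

definition null_seqs :: "(nat \<Rightarrow> 'a::real_normed_vector) set" where
  "null_seqs = {x. x \<longlonglongrightarrow> 0}"

definition conv_seqs :: "(nat \<Rightarrow> 'a::real_normed_vector) set" where
  "conv_seqs = {x. convergent x}"

definition frac_coeff :: "real \<Rightarrow> nat \<Rightarrow> real" where
  "frac_coeff \<alpha> i = (-1) ^ i * Gamma (\<alpha> + 1) / (fact i * Gamma (\<alpha> + 1 - real i))"

text \<open>Fractional difference; since x_j = 0 for j < 0, the series
  reduces to the finite sum over i = 0..k.\<close>
definition frac_diff :: "real \<Rightarrow> (nat \<Rightarrow> 'a::real_normed_field) \<Rightarrow> nat \<Rightarrow> 'a" where
  "frac_diff \<alpha> x k = (\<Sum>i\<le>k. of_real (frac_coeff \<alpha> i) * x (k - i))"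

definition gamma_domain ::
  "(nat \<Rightarrow> 'a::real_normed_field) set \<Rightarrow> real \<Rightarrow> (nat \<Rightarrow> 'a) \<Rightarrow> (nat \<Rightarrow> 'a) set" where
  "gamma_domain \<mu> \<alpha> u = {x. (\<lambda>k. \<Sum>j\<le>k. u j * frac_diff \<alpha> x j) \<in> \<mu>}"

definition mat_class ::
  "(nat \<Rightarrow> 'a::real_normed_field) set \<Rightarrow> (nat \<Rightarrow> 'a) set \<Rightarrow> (nat \<Rightarrow> nat \<Rightarrow> 'a) set" where
  "mat_class X Y = {A. \<forall>x\<in>X. (\<forall>n. summable (\<lambda>k. A n k * x k)) \<and>
                         (\<lambda>n. \<Sum>k. A n k * x k) \<in> Y}"

end

theory Submission
  imports Defs
begin

lemma ident:
  fixes u y :: "nat \<Rightarrow> 'a::comm_ring_1" and c :: "nat \<Rightarrow> 'a"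
  shows "(\<Sum>j\<le>k. u j * (\<Sum>i\<le>j. c i * y (j - i))) = (\<Sum>m\<le>k. (\<Sum>i\<le>k - m. c i * u (i + m)) * y m)"
proof (induction k)
  case 0 then show ?case by simp
next
  case (Suc k)
  have d: "(\<Sum>i\<le>Suc k - m. c i * u (i + m)) = (\<Sum>i\<le>k - m. c i * u (i + m)) + c (Suc k - m) * u (Suc k)" if "m \<le> k" for m
  proof -
    have "Suc k - m = Suc (k - m)" using that by simp
    then show ?thesis using that by simp
  qed
  have r: "(\<Sum>i\<le>Suc k. c i * y (Suc k - i)) = (\<Sum>m\<le>Suc k. c (Suc k - m) * y m)"
    by (rule sum.reindex_bij_witness[where i="\<lambda>m. Suc k - m" and j="\<lambda>m. Suc k - m"]) auto
  have "(\<Sum>m\<le>Suc k. (\<Sum>i\<le>Suc k - m. c i * u (i + m)) * y m)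
     = (\<Sum>m\<le>k. (\<Sum>i\<le>Suc k - m. c i * u (i + m)) * y m) + c 0 * u (Suc k) * y (Suc k)"
    by simp
  also have "(\<Sum>m\<le>k. (\<Sum>i\<le>Suc k - m. c i * u (i + m)) * y m)
     = (\<Sum>m\<le>k. (\<Sum>i\<le>k - m. c i * u (i + m)) * y m) + (\<Sum>m\<le>k. c (Suc k - m) * u (Suc k) * y m)"
    by (simp add: d distrib_right sum.distrib)
  finally have "(\<Sum>m\<le>Suc k. (\<Sum>i\<le>Suc k - m. c i * u (i + m)) * y m)
     = (\<Sum>m\<le>k. (\<Sum>i\<le>k - m. c i * u (i + m)) * y m) + u (Suc k) * (\<Sum>m\<le>Suc k. c (Suc k - m) * y m)"
    by (simp add: sum_distrib_left algebra_simps)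
  then show ?case using Suc r by simp
qed

lemma rowsum:
  fixes A :: "nat \<Rightarrow> nat \<Rightarrow> 'a::real_normed_field" and d :: "nat \<Rightarrow> 'a"
  assumes "\<forall>j. summable (\<lambda>k. A j k * x k)"
  shows "summable (\<lambda>k. (\<Sum>j\<le>n. d j * A j k) * x k) \<and>
    (\<Sum>k. (\<Sum>j\<le>n. d j * A j k) * x k) = (\<Sum>j\<le>n. d j * (\<Sum>k. A j k * x k))"
proof -
  have e: "(\<lambda>k. (\<Sum>j\<le>n. d j * A j k) * x k) = (\<lambda>k. \<Sum>j\<le>n. d j * (A j k * x k))"
    by (simp add: sum_distrib_right mult.assoc)
  have s: "\<And>j. summable (\<lambda>k. d j * (A j k * x k))"
    using assms by (intro summable_mult) auto
  show ?thesis unfolding e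
    using summable_sum[of "{..n}", OF s] suminf_sum[of "{..n}", OF s] suminf_mult[of _ "d _"] assms
    by (simp add: suminf_mult)
qed

lemma rowsumA:
  fixes A B :: "nat \<Rightarrow> nat \<Rightarrow> 'a::real_normed_field" and d :: "nat \<Rightarrow> nat \<Rightarrow> 'a"
  assumes "\<forall>n. summable (\<lambda>k. B n k * x k)"
    and "\<And>n k. B n k = (\<Sum>j\<le>n. d n j * A j k)"
    and "\<And>n. d n n \<noteq> 0"
  shows "summable (\<lambda>k. A n k * x k)"
proof (induction n rule: less_induct)
  case (less n)
  have e: "(\<lambda>k. A n k * x k) = (\<lambda>k. (B n k * x k - (\<Sum>j<n. d n j * (A j k * x k))) / d n n)"
  proof
    fix k
    have "B n k = (\<Sum>j<n. d n j * A j k) + d n n * A n k"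
      by (simp add: assms(2) flip: lessThan_Suc_atMost)
    then show "A n k * x k = (B n k * x k - (\<Sum>j<n. d n j * (A j k * x k))) / d n n"
      using assms(3)[of n] by (simp add: field_simps sum_distrib_right sum_distrib_left mult.assoc)
  qed
  have "summable (\<lambda>k. \<Sum>j<n. d n j * (A j k * x k))"
    by (intro summable_sum summable_mult) (use less in auto)
  then show ?case unfolding e
    using assms(1) by (intro summable_divide summable_diff) auto
qed

lemma coeff0: "0 < \<alpha> \<Longrightarrow> frac_coeff \<alpha> 0 = 1"
proof -
  assume "0 < \<alpha>"
  then have "Gamma (\<alpha> + 1) > 0" by (intro Gamma_real_pos) simp
  then show ?thesis unfolding frac_coeff_def by simp
qed

theorem theorem5:
  fixes \<alpha> :: real
    and u :: "nat \<Rightarrow> 'a::real_normed_field"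
    and lam :: "(nat \<Rightarrow> 'a) set"
    and \<mu> :: "(nat \<Rightarrow> 'a) set"
    and A :: "nat \<Rightarrow> nat \<Rightarrow> 'a"
  assumes "0 < \<alpha>" and "\<alpha> < 1"
    and "\<forall>k. u k \<noteq> 0"
    and "\<mu> \<in> {null_seqs, conv_seqs}"
  shows "A \<in> mat_class lam (gamma_domain \<mu> \<alpha> u) \<longleftrightarrow>
         (\<lambda>n k. \<Sum>j\<le>n. (\<Sum>i\<le>n - j. of_real (frac_coeff \<alpha> i) * u (i + j)) * A j k)
           \<in> mat_class lam \<mu>"
  proof -
  let ?c = "\<lambda>i. (of_real (frac_coeff \<alpha> i) :: 'a)"
  let ?d = "\<lambda>n j. \<Sum>i\<le>n - j. ?c i * u (i + j)"
  let ?B = "\<lambda>n k. \<Sum>j\<le>n. ?d n j * A j k"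
  have dnn: "?d n n \<noteq> 0" for n using coeff0[OF assms(1)] assms(3) by simp
  have key: "((\<forall>n. summable (\<lambda>k. A n k * x k)) \<and>
        (\<lambda>k. \<Sum>j\<le>k. u j * frac_diff \<alpha> (\<lambda>n. \<Sum>k. A n k * x k) j) \<in> \<mu>) \<longleftrightarrow>
        ((\<forall>n. summable (\<lambda>k. ?B n k * x k)) \<and> (\<lambda>n. \<Sum>k. ?B n k * x k) \<in> \<mu>)" for x
  proof
    assume h: "(\<forall>n. summable (\<lambda>k. A n k * x k)) \<and>
        (\<lambda>k. \<Sum>j\<le>k. u j * frac_diff \<alpha> (\<lambda>n. \<Sum>k. A n k * x k) j) \<in> \<mu>"
    have eq: "(\<lambda>k. \<Sum>j\<le>k. u j * frac_diff \<alpha> (\<lambda>n. \<Sum>k. A n k * x k) j) = (\<lambda>n. \<Sum>k. ?B n k * x k)"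
      proof
      fix n
      define y where "y = (\<lambda>n. \<Sum>k. A n k * x k)"
      have "(\<Sum>j\<le>n. u j * frac_diff \<alpha> y j) = (\<Sum>m\<le>n. ?d n m * y m)"
        unfolding frac_diff_def by (rule ident)
      also have "\<dots> = (\<Sum>k. ?B n k * x k)"
        unfolding y_def by (rule conjunct2[OF rowsum[of A x "?d n" n], symmetric]) (use h in blast)
      finally show "(\<Sum>j\<le>n. u j * frac_diff \<alpha> (\<lambda>n. \<Sum>k. A n k * x k) j) = (\<Sum>k. ?B n k * x k)"
        unfolding y_def .
    qed
    show "(\<forall>n. summable (\<lambda>k. ?B n k * x k)) \<and> (\<lambda>n. \<Sum>k. ?B n k * x k) \<in> \<mu>"
    proof -
      have "summable (\<lambda>k. ?B n k * x k)" for n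
        by (rule conjunct1[OF rowsum[of A x "?d n" n]]) (use h in blast)
      then show ?thesis using h eq by simp
    qed
  next
    assume h: "(\<forall>n. summable (\<lambda>k. ?B n k * x k)) \<and> (\<lambda>n. \<Sum>k. ?B n k * x k) \<in> \<mu>"
    have sA0: "summable (\<lambda>k. A n k * x k)" for n
      by (rule rowsumA[where B="?B" and d="?d" and A=A]) (use h in blast, rule refl, rule dnn)
    then have sA: "\<forall>n. summable (\<lambda>k. A n k * x k)" by blast
    have eq: "(\<lambda>k. \<Sum>j\<le>k. u j * frac_diff \<alpha> (\<lambda>n. \<Sum>k. A n k * x k) j) = (\<lambda>n. \<Sum>k. ?B n k * x k)"
      proof
      fix n
      define y where "y = (\<lambda>n. \<Sum>k. A n k * x k)"
      have "(\<Sum>j\<le>n. u j * frac_diff \<alpha> y j) = (\<Sum>m\<le>n. ?d n m * y m)"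
        unfolding frac_diff_def by (rule ident)
      also have "\<dots> = (\<Sum>k. ?B n k * x k)"
        unfolding y_def by (rule conjunct2[OF rowsum[of A x "?d n" n], symmetric]) (use sA in blast)
      finally show "(\<Sum>j\<le>n. u j * frac_diff \<alpha> (\<lambda>n. \<Sum>k. A n k * x k) j) = (\<Sum>k. ?B n k * x k)"
        unfolding y_def .
    qed
    show "(\<forall>n. summable (\<lambda>k. A n k * x k)) \<and>
        (\<lambda>k. \<Sum>j\<le>k. u j * frac_diff \<alpha> (\<lambda>n. \<Sum>k. A n k * x k) j) \<in> \<mu>"
      using sA h eq by simp
  qed
  show ?thesis unfolding mat_class_def gamma_domain_def mem_Collect_eq by (simp only: key)
qed

end
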